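(* Consider the following game for an adversary $\mathcal{A}=(\mathcal{A}_M,\mathcal{A}_L,\mathcal{A}_R)$ with parameter $n=n(\lambda)$: (1) The challenger samples a uniformly random invertible $U\in\mathbb{F}_2^{n\times n}$, lets $A$ be the span of its first $n/2$ columns, samples $s\leftarrow\mathsf{CS}(A)$ and $t\leftarrow\mathsf{CS}(A^\perp)$ uniformly, and sends $|A_{s,t}\rangle$ to $\mathcal{A}_M$. (2) $\mathcal{A}_M$ may abort (the game outcome is then $\bot$); otherwise it produces a bipartite state on registers $\mathbf{L}\mathbf{R}$, sending $\mathbf{L}$ to $\mathcal{A}_L$ and $\mathbf{R}$ to $\mathcal{A}_R$. (3) The challenger samples $r_L,r_R\leftarrow\mathbb{F}_2^n$ uniformly; $\mathcal{A}_L$ receives $(U,r_L)$ and outputs $b_0^l$, $\mathcal{A}_R$ receives $(U,r_R)$ and outputs $b_1^r$. The adversary wins iff $b_0^l\oplus b_1^r=\langle r_L,s\rangle\oplus\langle r_R,t\rangle$. Then for any adversary $\mathcal{A}$ with $\Pr[\text{outcome}\ne\bot]\ge 1/\mathrm{poly}(\lambda)$, $$\frac{\Pr[\text{outcome}=1]}{\Pr[\text{outcome}\ne\bot]}\le\frac12+\mathrm{negl}(\lambda).$$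
   Context: Coset state: $|A_{s,t}\rangle=\frac{1}{\sqrt{|A|}}\sum_{a\in A}(-1)^{\langle a,t\rangle}|a+s\rangle$. Canonical coset representatives: let $A\le\mathbb{F}_2^n$ be the span of the columns of an invertible $U$ with indices in a set $C$. $\mathsf{Can}_A(s):=Uw$ where $w$ is $U^{-1}s$ with the coordinates indexed by $C$ replaced by zeros; $\mathsf{Can}_{A^\perp}(s'):=U^{-t}w'$ where $w'$ is $U^{t}s'$ with coordinates not indexed by $C$ replaced by zeros; $\mathsf{CS}(A)$ and $\mathsf{CS}(A^\perp)$ are the respective images. Outcome $1/0/\bot$ means win/lose/abort. One may use as known that without the abort option, every adversary wins this game (the XOR version) with probability at most $1/2+\mathrm{negl}(\lambda)$. *)

theory Defs
  imports Complex_Main "HOL-Library.Z2" "Jordan_Normal_Form.Matrix"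
begin

definition inv_mat2 :: "bit mat \<Rightarrow> bit mat" where
  "inv_mat2 U = (SOME V. inverts_mat U V \<and> inverts_mat V U)"

definition idxC :: "nat \<Rightarrow> nat set" where
  "idxC n = {..< n div 2}"

definition subA :: "nat \<Rightarrow> bit mat \<Rightarrow> bit vec set" where
  "subA n U = {U *\<^sub>v w | w. w \<in> carrier_vec n \<and> (\<forall>i<n. i \<notin> idxC n \<longrightarrow> w $ i = 0)}"

definition CanA :: "nat \<Rightarrow> bit mat \<Rightarrow> bit vec \<Rightarrow> bit vec" where
  "CanA n U s = U *\<^sub>v (let w = inv_mat2 U *\<^sub>v s in vec n (\<lambda>i. if i \<in> idxC n then 0 else w $ i))"

definition CanAperp :: "nat \<Rightarrow> bit mat \<Rightarrow> bit vec \<Rightarrow> bit vec" where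
  "CanAperp n U s' = transpose_mat (inv_mat2 U) *\<^sub>v
     (let w' = transpose_mat U *\<^sub>v s' in vec n (\<lambda>i. if i \<in> idxC n then w' $ i else 0))"

definition CSA :: "nat \<Rightarrow> bit mat \<Rightarrow> bit vec set" where
  "CSA n U = CanA n U ` carrier_vec n"

definition CSAperp :: "nat \<Rightarrow> bit mat \<Rightarrow> bit vec set" where
  "CSAperp n U = CanAperp n U ` carrier_vec n"

definition InvMats :: "nat \<Rightarrow> bit mat set" where
  "InvMats n = {U \<in> carrier_mat n n. invertible_mat U}"

text \<open>Computational basis index i < 2^n corresponds to the bit string x with x_j = j-th binary digit of i.\<close>
definition dec :: "nat \<Rightarrow> nat \<Rightarrow> bit vec" where
  "dec n i = vec n (\<lambda>j. if odd (i div 2 ^ j) then 1 else 0)"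

definition sgn_bit :: "bit \<Rightarrow> complex" where
  "sgn_bit b = (if b = 1 then -1 else 1)"

text \<open>Coset state |A_{s,t}> = |A|^{-1/2} sum_{a in A} (-1)^{<a,t>} |a+s>.\<close>
definition coset_state :: "nat \<Rightarrow> bit mat \<Rightarrow> bit vec \<Rightarrow> bit vec \<Rightarrow> complex vec" where
  "coset_state n U s t = vec (2 ^ n) (\<lambda>i.
     (let a = dec n i + s in
      if a \<in> subA n U then sgn_bit (a \<bullet> t) / complex_of_real (sqrt (real (card (subA n U)))) else 0))"

definition norm2 :: "complex vec \<Rightarrow> real" where
  "norm2 v = (\<Sum>i<dim_vec v. (cmod (v $ i))\<^sup>2)"

definition qform :: "complex mat \<Rightarrow> complex vec \<Rightarrow> complex" where
  "qform M v = (\<Sum>i<dim_vec v. cnj (v $ i) * (M *\<^sub>v v) $ i)"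

text \<open>Kronecker (tensor) product; index of L \<otimes> R is iL * dR + iR.\<close>
definition kron :: "complex mat \<Rightarrow> complex mat \<Rightarrow> complex mat" where
  "kron M N = mat (dim_row M * dim_row N) (dim_col M * dim_col N)
     (\<lambda>(i, j). M $$ (i div dim_row N, j div dim_col N) * N $$ (i mod dim_row N, j mod dim_col N))"

definition effect :: "nat \<Rightarrow> complex mat \<Rightarrow> bool" where
  "effect d E \<longleftrightarrow> E \<in> carrier_mat d d \<and>
     (\<forall>v \<in> carrier_vec d. Im (qform E v) = 0 \<and> 0 \<le> Re (qform E v) \<and> Re (qform E v) \<le> norm2 v)"

definition povm2 :: "nat \<Rightarrow> complex mat \<Rightarrow> bit \<Rightarrow> complex mat" where
  "povm2 d E b = (if b = 1 then E else 1\<^sub>m d - E)"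

text \<open>An adversary (for one value of the security parameter):
  A_M is a quantum instrument with outcomes abort / continue; the continue branch is the
  completely positive map with Kraus operators kraus (from C^{2^n} to C^{dL} \<otimes> C^{dR}),
  the abort branch is the remaining probability mass.  A_L (resp. A_R), on input (U, r),
  performs the two-outcome measurement with effect measL U r (resp. measR U r) for output 1.\<close>
record adv =
  dL :: nat
  dR :: nat
  kraus :: "complex mat list"
  measL :: "bit mat \<Rightarrow> bit vec \<Rightarrow> complex mat"
  measR :: "bit mat \<Rightarrow> bit vec \<Rightarrow> complex mat"

definition valid_adv :: "nat \<Rightarrow> adv \<Rightarrow> bool" where
  "valid_adv n B \<longleftrightarrow>
     (\<forall>K \<in> set (kraus B). K \<in> carrier_mat (dL B * dR B) (2 ^ n)) \<and>
     (\<forall>v \<in> carrier_vec (2 ^ n). (\<Sum>K\<leftarrow>kraus B. norm2 (K *\<^sub>v v)) \<le> norm2 v) \<and>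
     (\<forall>U \<in> InvMats n. \<forall>r \<in> carrier_vec n.
        effect (dL B) (measL B U r) \<and> effect (dR B) (measR B U r))"

definition never_aborts :: "nat \<Rightarrow> adv \<Rightarrow> bool" where
  "never_aborts n B \<longleftrightarrow>
     (\<forall>v \<in> carrier_vec (2 ^ n). (\<Sum>K\<leftarrow>kraus B. norm2 (K *\<^sub>v v)) = norm2 v)"

definition game_avg :: "nat \<Rightarrow> (bit mat \<Rightarrow> bit vec \<Rightarrow> bit vec \<Rightarrow> bit vec \<Rightarrow> bit vec \<Rightarrow> real) \<Rightarrow> real" where
  "game_avg n f =
     (\<Sum>U \<in> InvMats n. \<Sum>s \<in> CSA n U. \<Sum>t \<in> CSAperp n U.
        \<Sum>rL \<in> carrier_vec n. \<Sum>rR \<in> carrier_vec n.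
          f U s t rL rR
          / (real (card (InvMats n)) * real (card (CSA n U)) * real (card (CSAperp n U))
             * real (card (carrier_vec n :: bit vec set)) ^ 2))"

definition nonabort_prob :: "nat \<Rightarrow> adv \<Rightarrow> real" where
  "nonabort_prob n B = game_avg n (\<lambda>U s t rL rR.
     (\<Sum>K\<leftarrow>kraus B. norm2 (K *\<^sub>v coset_state n U s t)))"

definition win_prob :: "nat \<Rightarrow> adv \<Rightarrow> real" where
  "win_prob n B = game_avg n (\<lambda>U s t rL rR.
     (\<Sum>K\<leftarrow>kraus B.
        \<Sum>bl \<in> (UNIV :: bit set). \<Sum>br \<in> (UNIV :: bit set).
          if bl + br = rL \<bullet> s + rR \<bullet> t
          then Re (qform (kron (povm2 (dL B) (measL B U rL) bl) (povm2 (dR B) (measR B U rR) br))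
                         (K *\<^sub>v coset_state n U s t))
          else 0))"

definition negligible :: "(nat \<Rightarrow> real) \<Rightarrow> bool" where
  "negligible f \<longleftrightarrow> (\<forall>c::nat. \<forall>\<^sub>F k in sequentially. \<bar>f k\<bar> \<le> 1 / real k ^ c)"

definition noticeable :: "(nat \<Rightarrow> real) \<Rightarrow> bool" where
  "noticeable f \<longleftrightarrow> (\<exists>c::nat. \<forall>\<^sub>F k in sequentially. f k \<ge> 1 / real k ^ c)"

end

theory Submission
  imports Defs "HOL-Library.FuncSet"
begin

definition Qf :: "nat \<Rightarrow> (nat \<Rightarrow> nat \<Rightarrow> complex) \<Rightarrow> (nat \<Rightarrow> complex) \<Rightarrow> complex" where
  "Qf d m v = (\<Sum>i<d. \<Sum>j<d. cnj (v i) * m i j * v j)"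

definition linf :: "nat \<Rightarrow> (nat \<Rightarrow> complex) \<Rightarrow> (nat \<Rightarrow> complex) \<Rightarrow> complex" where
  "linf d r v = (\<Sum>j<d. r j * v j)"

definition hermf :: "nat \<Rightarrow> (nat \<Rightarrow> nat \<Rightarrow> complex) \<Rightarrow> bool" where
  "hermf d m \<longleftrightarrow> (\<forall>i<d. \<forall>j<d. m i j = cnj (m j i))"

lemma hermD: "hermf d m \<Longrightarrow> i < d \<Longrightarrow> j < d \<Longrightarrow> m i j = cnj (m j i)"
  unfolding hermf_def by blast

lemma Qf_split:
  assumes k: "k < d"
  shows "Qf d m v = cnj (v k) * m k k * v k + cnj (v k) * (\<Sum>j<d. m k j * (v(k:=0)) j)
     + (\<Sum>i<d. cnj ((v(k:=0)) i) * m i k) * v k + Qf d m (v(k:=0))"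
proof -
  let ?u = "v(k:=0)"
  have S: "\<And>f. (\<Sum>i<d. f i) = f k + (\<Sum>i\<in>{..<d}-{k}. f i)"
    using k by (simp add: sum.remove)
  have S0: "(\<Sum>i\<in>{..<d}-{k}. f i) = (\<Sum>i<d. f i)" if "f k = 0" for f :: "nat \<Rightarrow> complex"
    using S[of f] that by simp
  have "Qf d m v = (\<Sum>j<d. cnj (v k) * m k j * v j) + (\<Sum>i\<in>{..<d}-{k}. \<Sum>j<d. cnj (v i) * m i j * v j)"
    unfolding Qf_def by (rule S)
  also have "(\<Sum>j<d. cnj (v k) * m k j * v j) = cnj (v k) * m k k * v k + cnj (v k) * (\<Sum>j<d. m k j * ?u j)"
    apply (subst S) apply (subst S0[symmetric]) apply simp
    by (simp add: sum_distrib_left mult.assoc)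
  also have "(\<Sum>i\<in>{..<d}-{k}. \<Sum>j<d. cnj (v i) * m i j * v j) = (\<Sum>i\<in>{..<d}-{k}. cnj (?u i) * m i k * v k + (\<Sum>j<d. cnj (?u i) * m i j * ?u j))"
  proof (rule sum.cong[OF refl])
    fix i assume i: "i \<in> {..<d}-{k}"
    have "(\<Sum>j<d. cnj (v i) * m i j * v j) = cnj (v i) * m i k * v k + (\<Sum>j\<in>{..<d}-{k}. cnj (v i) * m i j * v j)"
      by (rule S)
    also have "(\<Sum>j\<in>{..<d}-{k}. cnj (v i) * m i j * v j) = (\<Sum>j\<in>{..<d}-{k}. cnj (?u i) * m i j * ?u j)"
      using i by (intro sum.cong) auto
    also have "\<dots> = (\<Sum>j<d. cnj (?u i) * m i j * ?u j)" by (rule S0) simp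
    finally show "(\<Sum>j<d. cnj (v i) * m i j * v j) = cnj (?u i) * m i k * v k + (\<Sum>j<d. cnj (?u i) * m i j * ?u j)"
      using i by simp
  qed
  also have "\<dots> = (\<Sum>i<d. cnj (?u i) * m i k * v k + (\<Sum>j<d. cnj (?u i) * m i j * ?u j))"
    by (rule S0) simp
  also have "\<dots> = (\<Sum>i<d. cnj (?u i) * m i k) * v k + Qf d m ?u"
    unfolding Qf_def sum.distrib sum_distrib_right by simp
  finally show ?thesis by (simp add: algebra_simps)
qed

lemma d1: fixes g :: "nat \<Rightarrow> complex" assumes "j < d"
  shows "(\<Sum>j'<d. g j' * (if j' = j then 1 else 0)) = g j"
proof -
  have "(\<Sum>j'<d. g j' * (if j' = j then 1 else 0)) = (\<Sum>j'<d. if j' = j then g j' else 0)"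
    by (intro sum.cong) auto
  then show ?thesis using assms by simp
qed

lemma d2: fixes g :: "nat \<Rightarrow> complex" assumes "j < d"
  shows "(\<Sum>j'<d. (if j' = j then 1 else 0) * g j') = g j"
  using d1[OF assms, of g] by (simp add: mult.commute)

lemma Qf_delta:
  assumes j: "j < d"
  shows "Qf d m (\<lambda>i. if i = j then 1 else 0) = m j j"
proof -
  let ?e = "\<lambda>i. if i = j then (1::complex) else 0"
  have "(\<Sum>j'<d. cnj (?e i) * m i j' * ?e j') = cnj (?e i) * m i j" for i
    using d1[OF j, of "\<lambda>j'. cnj (?e i) * m i j'"] by simp
  then have "Qf d m ?e = (\<Sum>i<d. cnj (?e i) * m i j)" unfolding Qf_def by simp
  also have "\<dots> = (\<Sum>i<d. ?e i * m i j)" by (intro sum.cong) auto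
  also have "\<dots> = m j j" using d2[OF j, of "\<lambda>i. m i j"] .
  finally show ?thesis .
qed

lemma linf_split:
  assumes k: "k < d"
  shows "linf d r v = r k * v k + linf d r (v(k:=0))"
proof -
  have S: "\<And>f. (\<Sum>i<d. f i) = f k + (\<Sum>i\<in>{..<d}-{k}. f i)"
    using k by (simp add: sum.remove)
  have "linf d r (v(k:=0)) = (\<Sum>i\<in>{..<d}-{k}. r i * v i)"
    unfolding linf_def by (subst S) (auto intro: sum.cong)
  then show ?thesis unfolding linf_def by (subst S) simp
qed

lemma Qf_indep:
  assumes "\<forall>i<d. m i k = 0 \<and> m k i = 0"
  shows "Qf d m (v(k:=c)) = Qf d m v"
  unfolding Qf_def using assms by (intro sum.cong refl) auto

lemma zero_row:
  assumes h: "hermf d m" and psd: "\<forall>v. 0 \<le> Re (Qf d m v)" and k: "k < d" and mkk: "m k k = 0"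
    and j: "j < d"
  shows "m k j = 0"
proof (rule ccontr)
  assume z0: "m k j \<noteq> 0"
  then have jk: "j \<noteq> k" using mkk by auto
  define z where "z = m k j"
  define s :: real where "s = (Re (m j j) + 1) / (2 * (cmod z)^2)"
  define t where "t = - complex_of_real s * z"
  define v where "v = (\<lambda>i. if i = j then (1::complex) else 0)(k := t)"
  have u: "v(k:=0) = (\<lambda>i. if i = j then 1 else 0)" using jk unfolding v_def by auto
  have mjk: "m j k = cnj z" using hermD[OF h j k] unfolding z_def .
  have e1: "(\<Sum>j'<d. m k j' * (v(k:=0)) j') = z" unfolding u z_def using d1[OF j] .
  have e2: "(\<Sum>i<d. cnj ((v(k:=0)) i) * m i k) = cnj z" unfolding u
  proof -
    have "(\<Sum>i<d. cnj (if i = j then 1 else 0) * m i k) = (\<Sum>i<d. (if i = j then 1 else 0) * m i k)"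
      by (intro sum.cong) auto
    then show "(\<Sum>i<d. cnj (if i = j then 1 else 0) * m i k) = cnj z" using d2[OF j, of "\<lambda>i. m i k"] mjk by simp
  qed
  have vk: "v k = t" unfolding v_def by simp
  have "Qf d m v = cnj t * m k k * t + cnj t * z + cnj z * t + Qf d m (v(k:=0))"
    apply (subst Qf_split[OF k]) apply (simp only: e1 e2 vk) done
  also have "Qf d m (v(k:=0)) = m j j" unfolding u by (rule Qf_delta[OF j])
  finally have q1: "Qf d m v = cnj t * z + cnj z * t + m j j" using mkk by simp
  have q2: "cnj t * z + cnj z * t + m j j = - complex_of_real (2 * s * (cmod z)^2) + m j j"
    unfolding t_def by (simp add: complex_norm_square[symmetric] mult.commute mult.left_commute)
  have cz: "cmod z \<noteq> 0" using z0 z_def by simp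
  have q3: "2 * s * (cmod z)^2 = Re (m j j) + 1" unfolding s_def using cz by (simp add: field_simps)
  have "Re (Qf d m v) = -1" unfolding q1 q2 using q3 by simp
  moreover have "0 \<le> Re (Qf d m v)" using psd by blast
  ultimately show False by simp
qed

lemma chol_aux:
  "d - k = N \<Longrightarrow> k \<le> d \<Longrightarrow> hermf d m \<Longrightarrow> (\<forall>v. 0 \<le> Re (Qf d m v)) \<Longrightarrow>
   (\<forall>i<d. \<forall>j<d. i < k \<or> j < k \<longrightarrow> m i j = 0) \<Longrightarrow>
   \<exists>rs. \<forall>v. Qf d m v = complex_of_real (\<Sum>r\<leftarrow>rs. (cmod (linf d r v))\<^sup>2)"
proof (induction N arbitrary: k m)
  case 0
  then have "k = d" by simp
  then have "\<forall>v. Qf d m v = 0" using "0.prems"(5) unfolding Qf_def by simp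
  then show ?case by (intro exI[of _ "[]"]) simp
next
  case (Suc N)
  then have k: "k < d" by simp
  have h: "hermf d m" and psd: "\<forall>v. 0 \<le> Re (Qf d m v)"
    and supp: "\<forall>i<d. \<forall>j<d. i < k \<or> j < k \<longrightarrow> m i j = 0" using Suc.prems by auto
  show ?case
  proof (cases "m k k = 0")
    case True
    have r0: "m k j = 0" if "j < d" for j using zero_row[OF h psd k True that] .
    have c0: "m j k = 0" if "j < d" for j using hermD[OF h that k] r0[OF that] by simp
    have "\<forall>i<d. \<forall>j<d. i < Suc k \<or> j < Suc k \<longrightarrow> m i j = 0"
      using supp r0 c0 by (metis less_Suc_eq)
    moreover have "d - Suc k = N" using Suc.prems(1) by simp
    ultimately show ?thesis using Suc.IH[of "Suc k" m] h psd k by simp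
  next
    case False
    have mkk_real: "m k k = cnj (m k k)" using hermD[OF h k k] .
    define a where "a = Re (m k k)"
    have mkk: "m k k = complex_of_real a" unfolding a_def using mkk_real
      by (simp add: complex_eq_iff)
    have "0 \<le> Re (Qf d m (\<lambda>i. if i = k then 1 else 0))" using psd by blast
    then have "0 \<le> a" unfolding Qf_delta[OF k] a_def .
    moreover have "a \<noteq> 0" using False mkk by auto
    ultimately have apos: "0 < a" by simp
    define sa where "sa = complex_of_real (sqrt a)"
    have sa0: "sa \<noteq> 0" using apos unfolding sa_def by simp
    have sasa: "sa * sa = complex_of_real a" unfolding sa_def using apos
      unfolding of_real_mult[symmetric] by simp
    have cnjsa: "cnj sa = sa" unfolding sa_def by simp
    define r where "r = (\<lambda>j. m k j / sa)"
    define m' where "m' = (\<lambda>i j. m i j - cnj (r i) * r j)"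
    have key: "Qf d m' v = Qf d m v - complex_of_real ((cmod (linf d r v))\<^sup>2)" for v
    proof -
      have "(\<Sum>i<d. \<Sum>j<d. cnj (v i) * (cnj (r i) * r j) * v j) = cnj (linf d r v) * linf d r v"
        unfolding linf_def by (simp add: sum_distrib_left sum_distrib_right cnj_sum mult.commute mult.left_commute)
      also have "\<dots> = complex_of_real ((cmod (linf d r v))\<^sup>2)" by (metis complex_norm_square mult.commute)
      moreover have "Qf d m' v = Qf d m v - (\<Sum>i<d. \<Sum>j<d. cnj (v i) * (cnj (r i) * r j) * v j)"
      proof -
        have e: "cnj (v i) * (m i j - cnj (r i) * r j) * v j = cnj (v i) * m i j * v j - cnj (v i) * (cnj (r i) * r j) * v j" for i j
          by (simp add: left_diff_distrib right_diff_distrib)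
        show ?thesis unfolding Qf_def m'_def e sum_subtractf ..
      qed
      ultimately show ?thesis by simp
    qed
    have h': "hermf d m'" unfolding hermf_def
    proof (intro allI impI)
      fix i j assume "i < d" "j < d"
      then show "m' i j = cnj (m' j i)" unfolding m'_def using hermD[OF h, of i j] by simp
    qed
    have rk: "r k = sa" unfolding r_def mkk sasa[symmetric] using sa0 by simp
    have row0: "m' k j = 0" if "j < d" for j
    proof -
      have "cnj (r k) * r j = m k j" using rk cnjsa sa0 unfolding r_def by simp
      then show ?thesis unfolding m'_def by simp
    qed
    have col0: "m' j k = 0" if "j < d" for j
      using hermD[OF h' that k] row0[OF that] by simp
    have supp': "\<forall>i<d. \<forall>j<d. i < Suc k \<or> j < Suc k \<longrightarrow> m' i j = 0"
    proof (intro allI impI)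
      fix i j assume ij: "i < d" "j < d" "i < Suc k \<or> j < Suc k"
      show "m' i j = 0"
      proof (cases "i = k \<or> j = k")
        case True then show ?thesis using row0 col0 ij by auto
      next
        case False
        then have "i < k \<or> j < k" using ij by auto
        moreover have "r i = 0" if "i < k" using supp hermD[OF h k ij(1)] ij that k unfolding r_def by auto
        moreover have "r j = 0" if "j < k" using supp ij that k unfolding r_def by auto
        ultimately show ?thesis using supp ij unfolding m'_def by auto
      qed
    qed
    have psd': "\<forall>v. 0 \<le> Re (Qf d m' v)"
    proof
      fix v
      define c where "c = - linf d r (v(k:=0)) / r k"
      have "linf d r (v(k:=c)) = 0"
        using linf_split[OF k, of r "v(k:=c)"] rk sa0 unfolding c_def by simp
      then have "Qf d m' (v(k:=c)) = Qf d m (v(k:=c))" using key by simp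
      moreover have "Qf d m' (v(k:=c)) = Qf d m' v" using Qf_indep row0 col0 by blast
      ultimately have "Qf d m' v = Qf d m (v(k:=c))" by simp
      moreover have "0 \<le> Re (Qf d m (v(k:=c)))" using psd by blast
      ultimately show "0 \<le> Re (Qf d m' v)" by simp
    qed
    have dN: "d - Suc k = N" using Suc.prems(1) by simp
    obtain rs where rs: "\<forall>v. Qf d m' v = complex_of_real (\<Sum>r\<leftarrow>rs. (cmod (linf d r v))\<^sup>2)"
      using Suc.IH[of "Suc k" m' , OF dN _ h' psd' supp'] k by auto
    show ?thesis
    proof (intro exI[of _ "r # rs"] allI)
      fix v
      have "Qf d m v = Qf d m' v + complex_of_real ((cmod (linf d r v))\<^sup>2)" using key[of v] by simp
      then show "Qf d m v = complex_of_real (\<Sum>r\<leftarrow>r # rs. (cmod (linf d r v))\<^sup>2)"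
        using rs by simp
    qed
  qed
qed

lemma norm2_alt: "complex_of_real (norm2 v) = (\<Sum>i<dim_vec v. cnj (v$i) * v$i)"
  unfolding norm2_def of_real_sum
  by (intro sum.cong refl) (metis complex_norm_square mult.commute)

lemma Qf_diff: "Qf d (\<lambda>i j. a i j - b i j) v = Qf d a v - Qf d b v"
  unfolding Qf_def by (simp add: left_diff_distrib right_diff_distrib sum_subtractf)

lemma Qf_add: "Qf d (\<lambda>i j. a i j + b i j) v = Qf d a v + Qf d b v"
  unfolding Qf_def by (simp add: distrib_left distrib_right sum.distrib)

lemma Qf_id: "Qf d (\<lambda>i j. if i = j then 1 else 0) v = (\<Sum>i<d. cnj (v i) * v i)"
proof -
  have "(\<Sum>j<d. cnj (v i) * (if i = j then 1 else 0) * v j) = cnj (v i) * v i" if "i < d" for i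
  proof -
    have "(\<Sum>j<d. cnj (v i) * (if i = j then 1 else 0) * v j) = (\<Sum>j<d. (if j = i then 1 else 0) * (cnj (v i) * v j))"
      by (intro sum.cong) auto
    also have "\<dots> = cnj (v i) * v i" using d2[OF that] .
    finally show ?thesis .
  qed
  then show ?thesis unfolding Qf_def by simp
qed

lemma mat_vec_idx: assumes "K \<in> carrier_mat D N" "w \<in> carrier_vec N" "l < D"
  shows "(K *\<^sub>v w) $ l = (\<Sum>j<N. K $$ (l, j) * w $ j)"
  using assms by (auto simp: scalar_prod_def atLeast0LessThan intro!: sum.cong)

lemma Qf_K:
  assumes K: "K \<in> carrier_mat D N" and w: "w \<in> carrier_vec N"
  shows "Qf N (\<lambda>i j. \<Sum>l<D. cnj (K $$ (l, i)) * K $$ (l, j)) (\<lambda>i. w $ i) = complex_of_real (norm2 (K *\<^sub>v w))"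
proof -
  have "complex_of_real (norm2 (K *\<^sub>v w)) = (\<Sum>l<D. cnj ((K *\<^sub>v w)$l) * (K *\<^sub>v w)$l)"
    unfolding norm2_alt using K by simp
  also have "\<dots> = (\<Sum>l<D. cnj (\<Sum>i<N. K $$ (l, i) * w $ i) * (\<Sum>j<N. K $$ (l, j) * w $ j))"
    using mat_vec_idx[OF K w] by simp
  also have "\<dots> = (\<Sum>l<D. \<Sum>i<N. \<Sum>j<N. cnj (w $ i) * (cnj (K $$ (l, i)) * K $$ (l, j)) * w $ j)"
    by (simp add: cnj_sum sum_distrib_left sum_distrib_right mult.commute mult.left_commute)
  also have "\<dots> = (\<Sum>i<N. \<Sum>l<D. \<Sum>j<N. cnj (w $ i) * (cnj (K $$ (l, i)) * K $$ (l, j)) * w $ j)"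
    by (rule sum.swap)
  also have "\<dots> = (\<Sum>i<N. \<Sum>j<N. \<Sum>l<D. cnj (w $ i) * (cnj (K $$ (l, i)) * K $$ (l, j)) * w $ j)"
    by (intro sum.cong refl sum.swap)
  also have "\<dots> = Qf N (\<lambda>i j. \<Sum>l<D. cnj (K $$ (l, i)) * K $$ (l, j)) (\<lambda>i. w $ i)"
    unfolding Qf_def by (simp add: sum_distrib_left sum_distrib_right)
  finally show ?thesis by simp
qed

definition gK :: "complex mat \<Rightarrow> nat \<Rightarrow> nat \<Rightarrow> complex" where
  "gK K i j = (\<Sum>l<dim_row K. cnj (K $$ (l, i)) * K $$ (l, j))"

lemma Qf_Ks:
  assumes "\<forall>K\<in>set Ks. K \<in> carrier_mat (D K) N" and w: "w \<in> carrier_vec N"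
  shows "Qf N (\<lambda>i j. \<Sum>K\<leftarrow>Ks. gK K i j) (\<lambda>i. w $ i) = complex_of_real (\<Sum>K\<leftarrow>Ks. norm2 (K *\<^sub>v w))"
  using assms(1)
proof (induction Ks)
  case Nil
  then show ?case unfolding Qf_def by simp
next
  case (Cons K Ks)
  have "K \<in> carrier_mat (dim_row K) N" using Cons.prems by auto
  then have "Qf N (gK K) (\<lambda>i. w $ i) = complex_of_real (norm2 (K *\<^sub>v w))"
    unfolding gK_def using Qf_K[OF _ w] by blast
  then show ?case using Cons Qf_add[of N "gK K" "\<lambda>i j. \<Sum>K\<leftarrow>Ks. gK K i j" "\<lambda>i. w $ i"] by simp
qed

lemma cnj_sum_list: "cnj (\<Sum>x\<leftarrow>xs. f x) = (\<Sum>x\<leftarrow>xs. cnj (f x))"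
  by (induction xs) auto

lemma kraus_completion:
  assumes Kc: "\<forall>K\<in>set Ks. K \<in> carrier_mat D N"
    and sub: "\<forall>v\<in>carrier_vec N. (\<Sum>K\<leftarrow>Ks. norm2 (K *\<^sub>v v)) \<le> norm2 v"
  shows "\<exists>rs. (\<forall>r\<in>set rs. r \<in> carrier_vec N) \<and>
     (\<forall>v\<in>carrier_vec N. (\<Sum>K\<leftarrow>Ks. norm2 (K *\<^sub>v v)) + (\<Sum>r\<leftarrow>rs. (cmod (r \<bullet> v))\<^sup>2) = norm2 v)"
proof -
  define m where "m = (\<lambda>i j. (if i = j then 1 else 0) - (\<Sum>K\<leftarrow>Ks. gK K i j))"
  have Kc': "\<forall>K\<in>set Ks. K \<in> carrier_mat (dim_row K) N" using Kc by auto
  have Qv: "Qf N m (\<lambda>i. w $ i) = complex_of_real (norm2 w) - complex_of_real (\<Sum>K\<leftarrow>Ks. norm2 (K *\<^sub>v w))"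
    if w: "w \<in> carrier_vec N" for w
  proof -
    have "Qf N m (\<lambda>i. w $ i) = Qf N (\<lambda>i j. if i = j then 1 else 0) (\<lambda>i. w $ i) - Qf N (\<lambda>i j. \<Sum>K\<leftarrow>Ks. gK K i j) (\<lambda>i. w $ i)"
      unfolding m_def by (rule Qf_diff)
    also have "Qf N (\<lambda>i j. if i = j then 1 else 0) (\<lambda>i. w $ i) = complex_of_real (norm2 w)"
      unfolding Qf_id norm2_alt using w by simp
    finally show ?thesis using Qf_Ks[OF Kc' w] by simp
  qed
  have herm: "hermf N m" unfolding hermf_def m_def gK_def
    by (simp add: cnj_sum_list cnj_sum mult.commute)
  have psd: "\<forall>v. 0 \<le> Re (Qf N m v)"
  proof
    fix v
    have "Qf N m v = Qf N m (\<lambda>i. vec N v $ i)" unfolding Qf_def by (intro sum.cong refl) auto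
    also have "\<dots> = complex_of_real (norm2 (vec N v)) - complex_of_real (\<Sum>K\<leftarrow>Ks. norm2 (K *\<^sub>v vec N v))"
      by (rule Qv) simp
    finally show "0 \<le> Re (Qf N m v)" using sub by simp
  qed
  obtain rs where rs: "\<forall>v. Qf N m v = complex_of_real (\<Sum>r\<leftarrow>rs. (cmod (linf N r v))\<^sup>2)"
    using chol_aux[of N 0 N m] herm psd by auto
  show ?thesis
  proof (intro exI[of _ "map (vec N) rs"] conjI ballI)
    fix r assume "r \<in> set (map (vec N) rs)" then show "r \<in> carrier_vec N" by auto
  next
    fix v :: "complex vec" assume v: "v \<in> carrier_vec N"
    have lin: "vec N r \<bullet> v = linf N r (\<lambda>i. v $ i)" for r
      using v unfolding linf_def scalar_prod_def by (auto simp: atLeast0LessThan intro: sum.cong)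
    have "complex_of_real (norm2 v) - complex_of_real (\<Sum>K\<leftarrow>Ks. norm2 (K *\<^sub>v v)) = complex_of_real (\<Sum>r\<leftarrow>rs. (cmod (linf N r (\<lambda>i. v $ i)))\<^sup>2)"
      using Qv[OF v] rs by simp
    then have "norm2 v - (\<Sum>K\<leftarrow>Ks. norm2 (K *\<^sub>v v)) = (\<Sum>r\<leftarrow>rs. (cmod (linf N r (\<lambda>i. v $ i)))\<^sup>2)"
      by (metis of_real_diff of_real_eq_iff)
    then show "(\<Sum>K\<leftarrow>Ks. norm2 (K *\<^sub>v v)) + (\<Sum>r\<leftarrow>map (vec N) rs. (cmod (r \<bullet> v))\<^sup>2) = norm2 v"
      by (simp add: lin comp_def)
  qed
qed

lemma UNIV_bit: "(UNIV :: bit set) = {0, 1}" by auto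
lemma finite_bit: "finite (UNIV :: bit set)" by (simp add: UNIV_bit)
lemma card_bit: "card (UNIV :: bit set) = 2" by (simp add: UNIV_bit)
lemma bit_add_self: "(b::bit) + b = 0" by (cases b) auto

lemma carrier_vec_image: "carrier_vec n = (\<lambda>f. vec n f) ` (\<Pi>\<^sub>E i\<in>{..<n}. (UNIV :: bit set))"
proof (rule antisym)
  show "carrier_vec n \<subseteq> (\<lambda>f. vec n f) ` (\<Pi>\<^sub>E i\<in>{..<n}. (UNIV :: bit set))"
  proof (rule subsetI)
    fix v :: "bit vec" assume v: "v \<in> carrier_vec n"
    show "v \<in> (\<lambda>f. vec n f) ` (\<Pi>\<^sub>E i\<in>{..<n}. (UNIV :: bit set))"
    proof (rule image_eqI)
      show "v = vec n (restrict (\<lambda>i. v $ i) {..<n})" using v by (intro eq_vecI) auto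
      show "restrict (\<lambda>i. v $ i) {..<n} \<in> (\<Pi>\<^sub>E i\<in>{..<n}. (UNIV :: bit set))" by simp
    qed
  qed
  show "(\<lambda>f. vec n f) ` (\<Pi>\<^sub>E i\<in>{..<n}. (UNIV :: bit set)) \<subseteq> carrier_vec n"
    by (rule image_subsetI) simp
qed

lemma finite_cv: "finite (carrier_vec n :: bit vec set)"
  unfolding carrier_vec_image by (intro finite_imageI finite_PiE) (auto simp: finite_bit)

lemma card_cv: "card (carrier_vec n :: bit vec set) = 2 ^ n"
proof -
  have "inj_on (\<lambda>f. vec n f) (\<Pi>\<^sub>E i\<in>{..<n}. (UNIV :: bit set))"
  proof (rule inj_onI)
    fix f g assume f: "f \<in> (\<Pi>\<^sub>E i\<in>{..<n}. (UNIV :: bit set))" and g: "g \<in> (\<Pi>\<^sub>E i\<in>{..<n}. (UNIV :: bit set))"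
      and e: "vec n f = vec n g"
    have "f i = g i" if "i < n" for i using e that by (metis index_vec)
    then show "f = g" using f g by (intro PiE_ext) auto
  qed
  then have "card (carrier_vec n :: bit vec set) = card (\<Pi>\<^sub>E i\<in>{..<n}. (UNIV :: bit set))"
    unfolding carrier_vec_image by (rule card_image)
  also have "\<dots> = 2 ^ n" by (simp add: card_PiE card_bit)
  finally show ?thesis .
qed

lemma dec_carrier: "dec n i \<in> carrier_vec n" unfolding dec_def by simp

lemma dec_inj: "inj_on (dec n) {..<2^n}"
proof (rule inj_onI)
  fix i j assume i: "i \<in> {..<(2::nat)^n}" and j: "j \<in> {..<(2::nat)^n}" and e: "dec n i = dec n j"
  have "bit i b = bit j b" for b
  proof (cases "b < n")
    case True
    have "dec n i $ b = dec n j $ b" using e by simp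
    then have "odd (i div 2 ^ b) = odd (j div 2 ^ b)" using True unfolding dec_def by (auto split: if_splits)
    then show ?thesis by (simp add: bit_iff_odd)
  next
    case False
    have "(2::nat)^n \<le> 2^b" using False by simp
    then have "i < 2^b" "j < 2^b" using i j by (auto intro: less_le_trans)
    then have "i div 2^b = 0" "j div 2^b = 0" by simp_all
    then show ?thesis by (simp add: bit_iff_odd)
  qed
  then show "i = j" by (simp add: bit_eq_iff)
qed

lemma dec_image: "dec n ` {..<2^n} = carrier_vec n"
proof (rule card_seteq)
  show "finite (carrier_vec n :: bit vec set)" by (rule finite_cv)
  show "dec n ` {..<2^n} \<subseteq> carrier_vec n" using dec_carrier by auto
  show "card (carrier_vec n :: bit vec set) \<le> card (dec n ` {..<2^n})"
    using card_image[OF dec_inj] card_cv by simp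
qed

lemma vec_add_cancel: fixes x s :: "bit vec"
  assumes "x \<in> carrier_vec n" "s \<in> carrier_vec n" shows "x + s + s = x"
  using assms by (intro eq_vecI) (auto simp: add.assoc bit_add_self)

lemma subA_carrier: assumes "U \<in> carrier_mat n n" shows "subA n U \<subseteq> carrier_vec n"
  using assms unfolding subA_def by auto

lemma subA_zero: assumes "U \<in> carrier_mat n n" shows "0\<^sub>v n \<in> subA n U"
proof -
  have "U *\<^sub>v 0\<^sub>v n = 0\<^sub>v n" using assms by (intro eq_vecI) (auto simp: scalar_prod_def)
  then show ?thesis unfolding subA_def by (intro CollectI exI[of _ "0\<^sub>v n"]) auto
qed

lemma finite_subA: assumes "U \<in> carrier_mat n n" shows "finite (subA n U)"
  using finite_subset[OF subA_carrier[OF assms] finite_cv] .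

lemma CSA_carrier: assumes "U \<in> carrier_mat n n" shows "CSA n U \<subseteq> carrier_vec n"
  using assms unfolding CSA_def CanA_def by auto

lemma norm2_coset:
  assumes U: "U \<in> carrier_mat n n" and s: "s \<in> carrier_vec n"
  shows "norm2 (coset_state n U s t) = 1"
proof -
  let ?A = "subA n U"
  let ?c = "real (card ?A)"
  have cpos: "?c > 0" using subA_zero[OF U] finite_subA[OF U] card_gt_0_iff by fastforce
  have tm: "(cmod (coset_state n U s t $ i))\<^sup>2 = (if dec n i + s \<in> ?A then 1 / ?c else 0)" if "i < 2^n" for i
  proof -
    have sg: "cmod (sgn_bit b) = 1" for b unfolding sgn_bit_def by auto
    show ?thesis using that cpos unfolding coset_state_def Let_def
      by (auto simp: sg norm_divide power_divide)
  qed
  have "norm2 (coset_state n U s t) = (\<Sum>i<2^n. if dec n i + s \<in> ?A then 1 / ?c else 0)"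
    unfolding norm2_def using tm by (simp add: coset_state_def)
  also have "\<dots> = real (card ({..<2^n} \<inter> {i. dec n i + s \<in> ?A})) / ?c"
    by (simp add: sum.If_cases)
  also have "{..<2^n} \<inter> {i. dec n i + s \<in> ?A} = {i\<in>{..<2^n}. dec n i + s \<in> ?A}" by auto
  also have "card {i\<in>{..<2^n}. dec n i + s \<in> ?A} = card ?A"
  proof (rule bij_betw_same_card[of "\<lambda>i. dec n i + s"], rule bij_betw_imageI)
    show "inj_on (\<lambda>i. dec n i + s) {i \<in> {..<2 ^ n}. dec n i + s \<in> ?A}"
    proof (rule inj_onI)
      fix i j assume i: "i \<in> {i \<in> {..<2 ^ n}. dec n i + s \<in> ?A}" and j: "j \<in> {i \<in> {..<2 ^ n}. dec n i + s \<in> ?A}"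
        and e: "dec n i + s = dec n j + s"
      have "dec n i = dec n j" using vec_add_cancel[OF dec_carrier[of n i] s] vec_add_cancel[OF dec_carrier[of n j] s] e by metis
      then show "i = j" using dec_inj i j by (auto dest: inj_onD)
    qed
    show "(\<lambda>i. dec n i + s) ` {i \<in> {..<2 ^ n}. dec n i + s \<in> ?A} = ?A"
    proof
      show "(\<lambda>i. dec n i + s) ` {i \<in> {..<2 ^ n}. dec n i + s \<in> ?A} \<subseteq> ?A" by auto
      show "?A \<subseteq> (\<lambda>i. dec n i + s) ` {i \<in> {..<2 ^ n}. dec n i + s \<in> ?A}"
      proof
        fix a assume a: "a \<in> ?A"
        then have ac: "a \<in> carrier_vec n" using subA_carrier[OF U] by auto
        then have "a + s \<in> carrier_vec n" using s by simp
        then obtain i where i: "i < 2^n" "dec n i = a + s" using dec_image[of n] by (metis imageE lessThan_iff)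
        then have "dec n i + s = a" using vec_add_cancel[OF ac s] by simp
        then show "a \<in> (\<lambda>i. dec n i + s) ` {i \<in> {..<2 ^ n}. dec n i + s \<in> ?A}" using i a by force
      qed
    qed
  qed
  finally show ?thesis using cpos by simp
qed

lemma carrier_mat_sub: "carrier_mat n n \<subseteq> (\<lambda>f. mat n n f) ` (\<Pi>\<^sub>E ij\<in>{..<n}\<times>{..<n}. (UNIV :: bit set))"
proof (rule subsetI)
  fix A :: "bit mat" assume A: "A \<in> carrier_mat n n"
  show "A \<in> (\<lambda>f. mat n n f) ` (\<Pi>\<^sub>E ij\<in>{..<n}\<times>{..<n}. (UNIV :: bit set))"
  proof (rule image_eqI)
    show "A = mat n n (restrict (\<lambda>ij. A $$ ij) ({..<n}\<times>{..<n}))" using A by (intro eq_matI) auto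
    show "restrict (\<lambda>ij. A $$ ij) ({..<n}\<times>{..<n}) \<in> (\<Pi>\<^sub>E ij\<in>{..<n}\<times>{..<n}. (UNIV :: bit set))" by simp
  qed
qed

lemma finite_cm: "finite (carrier_mat n n :: bit mat set)"
  by (rule finite_subset[OF carrier_mat_sub]) (intro finite_imageI finite_PiE, auto simp: finite_bit)

lemma finite_Inv: "finite (InvMats n)"
  unfolding InvMats_def by (rule finite_subset[OF _ finite_cm]) auto

lemma one_Inv: "1\<^sub>m n \<in> InvMats n"
  unfolding InvMats_def invertible_mat_def inverts_mat_def square_mat.simps
  by (auto intro!: exI[of _ "1\<^sub>m n"])

lemma finite_CSA: "finite (CSA n U)" unfolding CSA_def using finite_cv by simp
lemma finite_CSAp: "finite (CSAperp n U)" unfolding CSAperp_def using finite_cv by simp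
lemma ne_CSA: "CSA n U \<noteq> {}" unfolding CSA_def using zero_carrier_vec[of n] by blast
lemma ne_CSAp: "CSAperp n U \<noteq> {}" unfolding CSAperp_def using zero_carrier_vec[of n] by blast

lemma game_avg_lin:
  assumes "\<And>U s t rL rR. U \<in> InvMats n \<Longrightarrow> s \<in> CSA n U \<Longrightarrow> t \<in> CSAperp n U \<Longrightarrow>
     rL \<in> carrier_vec n \<Longrightarrow> rR \<in> carrier_vec n \<Longrightarrow> f U s t rL rR = g U s t rL rR + c * h U s t rL rR"
  shows "game_avg n f = game_avg n g + c * game_avg n h"
proof -
  let ?D = "\<lambda>U. real (card (InvMats n)) * real (card (CSA n U)) * real (card (CSAperp n U))
             * real (card (carrier_vec n :: bit vec set)) ^ 2"
  have "game_avg n f = (\<Sum>U \<in> InvMats n. \<Sum>s \<in> CSA n U. \<Sum>t \<in> CSAperp n U.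
        \<Sum>rL \<in> carrier_vec n. \<Sum>rR \<in> carrier_vec n. g U s t rL rR / ?D U + c * (h U s t rL rR / ?D U))"
    unfolding game_avg_def by (intro sum.cong refl) (simp add: assms add_divide_distrib)
  also have "\<dots> = game_avg n g + c * game_avg n h"
    unfolding game_avg_def by (simp only: sum.distrib sum_distrib_left)
  finally show ?thesis .
qed

lemma game_avg_one: "game_avg n (\<lambda>U s t rL rR. 1) = 1"
proof -
  let ?I = "real (card (InvMats n))" and ?C = "real (card (carrier_vec n :: bit vec set))"
  have I0: "?I > 0" using finite_Inv one_Inv card_gt_0_iff by fastforce
  have C0: "?C > 0" using card_cv by simp
  have "game_avg n (\<lambda>U s t rL rR. 1) = (\<Sum>U \<in> InvMats n. 1 / ?I)"
    unfolding game_avg_def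
  proof (intro sum.cong refl)
    fix U
    let ?S = "real (card (CSA n U))" and ?T = "real (card (CSAperp n U))"
    have S0: "?S > 0" using finite_CSA ne_CSA card_gt_0_iff by fastforce
    have T0: "?T > 0" using finite_CSAp ne_CSAp card_gt_0_iff by fastforce
    have "(\<Sum>s\<in>CSA n U. \<Sum>t\<in>CSAperp n U. \<Sum>rL\<in>(carrier_vec n :: bit vec set). \<Sum>rR\<in>(carrier_vec n :: bit vec set). 1 / (?I * ?S * ?T * ?C\<^sup>2))
       = ?S * (?T * (?C * (?C * (1 / (?I * ?S * ?T * ?C\<^sup>2)))))" by simp
    also have "\<dots> = 1 / ?I" using S0 T0 C0 I0 by (simp add: field_simps power2_eq_square)
    finally show "(\<Sum>s\<in>CSA n U. \<Sum>t\<in>CSAperp n U. \<Sum>rL\<in>(carrier_vec n :: bit vec set). \<Sum>rR\<in>(carrier_vec n :: bit vec set). 1 / (?I * ?S * ?T * ?C\<^sup>2)) = 1 / ?I" .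
  qed
  also have "\<dots> = 1" using I0 by simp
  finally show ?thesis .
qed

lemma game_avg_zero:
  assumes "\<And>U s t rL rR. U \<in> InvMats n \<Longrightarrow> s \<in> CSA n U \<Longrightarrow> t \<in> CSAperp n U \<Longrightarrow>
     rL \<in> carrier_vec n \<Longrightarrow> rR \<in> carrier_vec n \<Longrightarrow> f U s t rL rR = 0"
  shows "game_avg n f = 0"
  unfolding game_avg_def by (intro sum.neutral ballI) (simp add: assms)

lemma sum_pad: fixes f :: "nat \<Rightarrow> 'a::comm_monoid_add"
  assumes "D \<le> D'" "\<And>i. D \<le> i \<Longrightarrow> i < D' \<Longrightarrow> f i = 0"
  shows "(\<Sum>i<D'. f i) = (\<Sum>i<D. f i)"
  using assms by (intro sum.mono_neutral_right) auto

definition pad :: "nat \<Rightarrow> complex vec \<Rightarrow> complex vec" where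
  "pad D' v = vec D' (\<lambda>i. if i < dim_vec v then v $ i else 0)"

definition single :: "nat \<Rightarrow> nat \<Rightarrow> complex \<Rightarrow> complex vec" where
  "single D idx c = vec D (\<lambda>i. if i = idx then c else 0)"

lemma qform_pad:
  assumes M': "M' \<in> carrier_mat D' D'" and M: "M \<in> carrier_mat D D" and DD: "D \<le> D'"
    and eq: "\<And>i j. i < D \<Longrightarrow> j < D \<Longrightarrow> M' $$ (i, j) = M $$ (i, j)"
    and v: "v \<in> carrier_vec D"
  shows "qform M' (pad D' v) = qform M v"
proof -
  let ?w = "pad D' v"
  have w: "?w \<in> carrier_vec D'" unfolding pad_def by simp
  have wi: "?w $ i = (if i < D then v $ i else 0)" if "i < D'" for i using that v unfolding pad_def by simp
  have Mw: "(M' *\<^sub>v ?w) $ i = (M *\<^sub>v v) $ i" if i: "i < D" for i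
  proof -
    have "(M' *\<^sub>v ?w) $ i = (\<Sum>j<D'. M' $$ (i, j) * ?w $ j)" using mat_vec_idx[OF M' w] i DD by simp
    also have "\<dots> = (\<Sum>j<D. M' $$ (i, j) * ?w $ j)" by (rule sum_pad[OF DD]) (simp add: wi)
    also have "\<dots> = (\<Sum>j<D. M $$ (i, j) * v $ j)" using DD by (intro sum.cong refl) (simp add: wi eq i)
    also have "\<dots> = (M *\<^sub>v v) $ i" using mat_vec_idx[OF M v i] by simp
    finally show ?thesis .
  qed
  have "qform M' ?w = (\<Sum>i<D'. cnj (?w $ i) * (M' *\<^sub>v ?w) $ i)" unfolding qform_def using w by simp
  also have "\<dots> = (\<Sum>i<D. cnj (?w $ i) * (M' *\<^sub>v ?w) $ i)" by (rule sum_pad[OF DD]) (simp add: wi)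
  also have "\<dots> = (\<Sum>i<D. cnj (v $ i) * (M *\<^sub>v v) $ i)" using DD by (intro sum.cong refl) (simp add: wi Mw)
  also have "\<dots> = qform M v" unfolding qform_def using v by simp
  finally show ?thesis .
qed

lemma norm2_pad: assumes "dim_vec v \<le> D'" shows "norm2 (pad D' v) = norm2 v"
proof -
  have "norm2 (pad D' v) = (\<Sum>i<D'. (cmod (pad D' v $ i))\<^sup>2)" unfolding norm2_def pad_def by simp
  also have "\<dots> = (\<Sum>i<dim_vec v. (cmod (pad D' v $ i))\<^sup>2)" by (rule sum_pad[OF assms]) (simp add: pad_def)
  also have "\<dots> = norm2 v" unfolding norm2_def using assms by (intro sum.cong refl) (simp add: pad_def)
  finally show ?thesis .
qed

lemma qform_single:
  assumes M: "M \<in> carrier_mat D D" and idx: "idx < D"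
  shows "qform M (single D idx c) = cnj c * M $$ (idx, idx) * c"
proof -
  let ?w = "single D idx c"
  have w: "?w \<in> carrier_vec D" unfolding single_def by simp
  have "(M *\<^sub>v ?w) $ idx = (\<Sum>j<D. M $$ (idx, j) * ?w $ j)" using mat_vec_idx[OF M w idx] .
  also have "\<dots> = (\<Sum>j<D. M $$ (idx, j) * c * (if j = idx then 1 else 0))"
    by (intro sum.cong refl) (simp add: single_def)
  also have "\<dots> = M $$ (idx, idx) * c" using d1[OF idx, of "\<lambda>j. M $$ (idx, j) * c"] .
  finally have e: "(M *\<^sub>v ?w) $ idx = M $$ (idx, idx) * c" .
  have "qform M ?w = (\<Sum>i<D. (if i = idx then 1 else 0) * (cnj c * (M *\<^sub>v ?w) $ i))"
    unfolding qform_def using w by (intro sum.cong) (auto simp: single_def)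
  also have "\<dots> = cnj c * (M *\<^sub>v ?w) $ idx" using d2[OF idx] .
  finally show ?thesis using e by simp
qed

lemma norm2_single: assumes "idx < D" shows "norm2 (single D idx c) = (cmod c)\<^sup>2"
proof -
  have "norm2 (single D idx c) = (\<Sum>i<D. if i = idx then (cmod c)\<^sup>2 else 0)"
    unfolding norm2_def single_def by (intro sum.cong) auto
  then show ?thesis using assms by simp
qed

definition extK :: "nat \<Rightarrow> complex mat \<Rightarrow> complex mat" where
  "extK D K = mat D (dim_col K) (\<lambda>(i, j). if i < dim_row K then K $$ (i, j) else 0)"

definition Jr :: "nat \<Rightarrow> nat \<Rightarrow> complex vec \<Rightarrow> complex mat" where
  "Jr D idx r = mat D (dim_vec r) (\<lambda>(i, j). if i = idx then r $ j else 0)"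

lemma extK_carrier: "K \<in> carrier_mat D0 N \<Longrightarrow> extK D K \<in> carrier_mat D N"
  unfolding extK_def by auto

lemma Jr_carrier: "r \<in> carrier_vec N \<Longrightarrow> Jr D idx r \<in> carrier_mat D N"
  unfolding Jr_def by auto

lemma extK_mult:
  assumes K: "K \<in> carrier_mat D0 N" and DD: "D0 \<le> D" and v: "v \<in> carrier_vec N"
  shows "extK D K *\<^sub>v v = pad D (K *\<^sub>v v)"
proof (rule eq_vecI)
  show "dim_vec (extK D K *\<^sub>v v) = dim_vec (pad D (K *\<^sub>v v))" unfolding extK_def pad_def by simp
  fix i assume "i < dim_vec (pad D (K *\<^sub>v v))"
  then have i: "i < D" unfolding pad_def by simp
  have "(extK D K *\<^sub>v v) $ i = (\<Sum>j<N. extK D K $$ (i, j) * v $ j)"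
    using mat_vec_idx[OF extK_carrier[OF K] v i] .
  also have "\<dots> = (if i < D0 then (\<Sum>j<N. K $$ (i, j) * v $ j) else 0)"
    using K i unfolding extK_def by (auto intro: sum.cong)
  also have "\<dots> = pad D (K *\<^sub>v v) $ i"
    using i K mat_vec_idx[OF K v] unfolding pad_def by auto
  finally show "(extK D K *\<^sub>v v) $ i = pad D (K *\<^sub>v v) $ i" .
qed

lemma Jr_mult:
  assumes r: "r \<in> carrier_vec N" and v: "v \<in> carrier_vec N"
  shows "Jr D idx r *\<^sub>v v = single D idx (r \<bullet> v)"
proof (rule eq_vecI)
  show "dim_vec (Jr D idx r *\<^sub>v v) = dim_vec (single D idx (r \<bullet> v))" unfolding Jr_def single_def by simp
  fix i assume "i < dim_vec (single D idx (r \<bullet> v))"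
  then have i: "i < D" unfolding single_def by simp
  have "(Jr D idx r *\<^sub>v v) $ i = (\<Sum>j<N. Jr D idx r $$ (i, j) * v $ j)"
    using mat_vec_idx[OF Jr_carrier[OF r] v i] .
  also have "\<dots> = (if i = idx then (\<Sum>j<N. r $ j * v $ j) else 0)"
    using r i unfolding Jr_def by (auto intro: sum.cong)
  also have "\<dots> = single D idx (r \<bullet> v) $ i"
    using i r v unfolding single_def scalar_prod_def by (auto simp: atLeast0LessThan)
  finally show "(Jr D idx r *\<^sub>v v) $ i = single D idx (r \<bullet> v) $ i" .
qed

definition extE :: "nat \<Rightarrow> complex mat \<Rightarrow> complex mat" where
  "extE d E = mat (Suc d) (Suc d) (\<lambda>(i, j). if i < d \<and> j < d then E $$ (i, j) else if i = d \<and> j = d then 1/2 else 0)"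

lemma extE_carrier: "extE d E \<in> carrier_mat (Suc d) (Suc d)" unfolding extE_def by simp

lemma norm2_Suc: assumes v: "v \<in> carrier_vec (Suc d)"
  shows "norm2 v = norm2 (vec d (\<lambda>i. v $ i)) + (cmod (v $ d))\<^sup>2"
  using v unfolding norm2_def by simp

lemma extE_qform:
  assumes E: "E \<in> carrier_mat d d" and v: "v \<in> carrier_vec (Suc d)"
  shows "qform (extE d E) v = qform E (vec d (\<lambda>i. v $ i)) + 1/2 * (cnj (v $ d) * v $ d)"
proof -
  let ?u = "vec d (\<lambda>i. v $ i)"
  have u: "?u \<in> carrier_vec d" by simp
  have Ci: "(extE d E *\<^sub>v v) $ i = (E *\<^sub>v ?u) $ i" if i: "i < d" for i
  proof -
    have "(extE d E *\<^sub>v v) $ i = (\<Sum>j<Suc d. extE d E $$ (i, j) * v $ j)"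
      using mat_vec_idx[OF extE_carrier v] i by simp
    also have "\<dots> = (\<Sum>j<d. E $$ (i, j) * v $ j)" using i unfolding extE_def by simp
    also have "\<dots> = (E *\<^sub>v ?u) $ i" using mat_vec_idx[OF E u i] by simp
    finally show ?thesis .
  qed
  have Cd: "(extE d E *\<^sub>v v) $ d = 1/2 * v $ d"
  proof -
    have "(extE d E *\<^sub>v v) $ d = (\<Sum>j<Suc d. extE d E $$ (d, j) * v $ j)"
      using mat_vec_idx[OF extE_carrier v] by simp
    also have "\<dots> = 1/2 * v $ d" unfolding extE_def by simp
    finally show ?thesis .
  qed
  have "qform (extE d E) v = (\<Sum>i<Suc d. cnj (v $ i) * (extE d E *\<^sub>v v) $ i)" unfolding qform_def using v by simp
  also have "\<dots> = (\<Sum>i<d. cnj (?u $ i) * (E *\<^sub>v ?u) $ i) + cnj (v $ d) * (1/2 * v $ d)"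
    by (simp add: Ci Cd)
  also have "(\<Sum>i<d. cnj (?u $ i) * (E *\<^sub>v ?u) $ i) = qform E ?u" unfolding qform_def by simp
  finally show ?thesis by simp
qed

lemma cnj_mult_self: "cnj z * z = complex_of_real ((cmod z)\<^sup>2)"
  by (metis complex_norm_square mult.commute)

lemma effect_extE: assumes "effect d E" shows "effect (Suc d) (extE d E)"
  unfolding effect_def
proof (intro conjI ballI extE_carrier)
  have E: "E \<in> carrier_mat d d" using assms unfolding effect_def by simp
  fix v :: "complex vec" assume v: "v \<in> carrier_vec (Suc d)"
  let ?u = "vec d (\<lambda>i. v $ i)"
  have eu: "Im (qform E ?u) = 0 \<and> 0 \<le> Re (qform E ?u) \<and> Re (qform E ?u) \<le> norm2 ?u"
    using assms unfolding effect_def by simp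
  have q: "qform (extE d E) v = qform E ?u + complex_of_real (1/2 * (cmod (v $ d))\<^sup>2)"
    unfolding extE_qform[OF E v] cnj_mult_self by simp
  have n: "norm2 v = norm2 ?u + (cmod (v $ d))\<^sup>2" by (rule norm2_Suc[OF v])
  show "Im (qform (extE d E) v) = 0" unfolding q using eu by simp
  show "0 \<le> Re (qform (extE d E) v)" unfolding q using eu by simp
  have r: "Re (qform (extE d E) v) = Re (qform E ?u) + (cmod (v $ d))\<^sup>2 / 2" unfolding q by simp
  show "Re (qform (extE d E) v) \<le> norm2 v" using r eu zero_le_power2[of "cmod (v $ d)"] unfolding n by linarith
qed

lemma povm2_carrier: "E \<in> carrier_mat d d \<Longrightarrow> povm2 d E b \<in> carrier_mat d d"
  unfolding povm2_def by auto

lemma povm2_ext: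
  assumes E: "E \<in> carrier_mat d d" and a: "a < d" and b: "b < d"
  shows "povm2 (Suc d) (extE d E) bl $$ (a, b) = povm2 d E bl $$ (a, b)"
  using E a b unfolding povm2_def extE_def by auto

lemma povm2_ext_dd: "povm2 (Suc d) (extE d E) bl $$ (d, d) = 1/2"
  unfolding povm2_def extE_def by auto

lemma povm2_sum00: assumes F: "F \<in> carrier_mat d d" and d: "0 < d"
  shows "povm2 d F 0 $$ (0, 0) + povm2 d F 1 $$ (0, 0) = 1"
  using F d unfolding povm2_def by auto

lemma kron_carrier: "P \<in> carrier_mat a a \<Longrightarrow> Q \<in> carrier_mat b b \<Longrightarrow> kron P Q \<in> carrier_mat (a * b) (a * b)"
  unfolding kron_def by auto

lemma kron_idx: "i < dim_row P * dim_row Q \<Longrightarrow> j < dim_col P * dim_col Q \<Longrightarrow>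
  kron P Q $$ (i, j) = P $$ (i div dim_row Q, j div dim_col Q) * Q $$ (i mod dim_row Q, j mod dim_col Q)"
  unfolding kron_def by simp

lemma win_K:
  assumes E: "E \<in> carrier_mat dl dl" and F: "F \<in> carrier_mat dr dr" and dr: "0 < dr"
    and K: "K \<in> carrier_mat (dl * dr) N" and psi: "\<psi> \<in> carrier_vec N"
  shows "qform (kron (povm2 (Suc dl) (extE dl E) bl) (povm2 dr F br)) (extK (Suc dl * dr) K *\<^sub>v \<psi>)
       = qform (kron (povm2 dl E bl) (povm2 dr F br)) (K *\<^sub>v \<psi>)"
proof -
  have P': "povm2 (Suc dl) (extE dl E) bl \<in> carrier_mat (Suc dl) (Suc dl)" by (rule povm2_carrier[OF extE_carrier])
  have P: "povm2 dl E bl \<in> carrier_mat dl dl" by (rule povm2_carrier[OF E])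
  have Q: "povm2 dr F br \<in> carrier_mat dr dr" by (rule povm2_carrier[OF F])
  have "extK (Suc dl * dr) K *\<^sub>v \<psi> = pad (Suc dl * dr) (K *\<^sub>v \<psi>)"
    by (rule extK_mult[OF K _ psi]) simp
  moreover have "qform (kron (povm2 (Suc dl) (extE dl E) bl) (povm2 dr F br)) (pad (Suc dl * dr) (K *\<^sub>v \<psi>))
       = qform (kron (povm2 dl E bl) (povm2 dr F br)) (K *\<^sub>v \<psi>)"
  proof (rule qform_pad[OF kron_carrier[OF P' Q] kron_carrier[OF P Q]])
    show "dl * dr \<le> Suc dl * dr" by simp
    show "K *\<^sub>v \<psi> \<in> carrier_vec (dl * dr)" using K psi by simp
    fix i j assume i: "i < dl * dr" and j: "j < dl * dr"
    have id: "i div dr < dl" "j div dr < dl" using i j by (simp_all add: less_mult_imp_div_less)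
    have i': "i < Suc dl * dr" "j < Suc dl * dr" using i j by simp_all
    show "kron (povm2 (Suc dl) (extE dl E) bl) (povm2 dr F br) $$ (i, j) = kron (povm2 dl E bl) (povm2 dr F br) $$ (i, j)"
      using P' P Q i j i' id by (simp add: kron_idx povm2_ext[OF E])
  qed
  ultimately show ?thesis by simp
qed

lemma win_J:
  assumes F: "F \<in> carrier_mat dr dr" and dr: "0 < dr"
    and r: "r \<in> carrier_vec N" and psi: "\<psi> \<in> carrier_vec N"
  shows "qform (kron (povm2 (Suc dl) (extE dl E) bl) (povm2 dr F br)) (Jr (Suc dl * dr) (dl * dr) r *\<^sub>v \<psi>)
       = complex_of_real ((cmod (r \<bullet> \<psi>))\<^sup>2) * (1/2 * povm2 dr F br $$ (0, 0))"
proof -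
  have P': "povm2 (Suc dl) (extE dl E) bl \<in> carrier_mat (Suc dl) (Suc dl)" by (rule povm2_carrier[OF extE_carrier])
  have Q: "povm2 dr F br \<in> carrier_mat dr dr" by (rule povm2_carrier[OF F])
  have idx: "dl * dr < Suc dl * dr" using dr by simp
  have kk: "kron (povm2 (Suc dl) (extE dl E) bl) (povm2 dr F br) $$ (dl * dr, dl * dr) = 1/2 * povm2 dr F br $$ (0, 0)"
    using P' Q idx dr by (simp add: kron_idx povm2_ext_dd)
  show ?thesis
    unfolding Jr_mult[OF r psi] qform_single[OF kron_carrier[OF P' Q] idx] kk
    by (simp only: cnj_mult_self[symmetric]) (simp add: ac_simps)
qed

lemma bit_sum_collapse: fixes Y :: "bit \<Rightarrow> real"
  shows "(\<Sum>bl\<in>(UNIV::bit set). \<Sum>br\<in>(UNIV::bit set). if bl + br = \<tau> then Y br else 0) = Y 0 + Y 1"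
  by (cases "\<tau> = 0") (auto simp: UNIV_bit bit_add_self)

definition fixA :: "adv \<Rightarrow> adv" where
  "fixA B = (if dR B = 0 then B\<lparr>dR := 1, kraus := [], measR := (\<lambda>U r. 0\<^sub>m 1 1)\<rparr> else B)"

definition rsOf :: "nat \<Rightarrow> adv \<Rightarrow> complex vec list" where
  "rsOf n B = (SOME rs. (\<forall>r\<in>set rs. r \<in> carrier_vec (2^n)) \<and>
     (\<forall>v\<in>carrier_vec (2^n). (\<Sum>K\<leftarrow>kraus B. norm2 (K *\<^sub>v v)) + (\<Sum>r\<leftarrow>rs. (cmod (r \<bullet> v))\<^sup>2) = norm2 v))"

definition consA :: "nat \<Rightarrow> adv \<Rightarrow> adv" where
  "consA n B = \<lparr>dL = Suc (dL B), dR = dR B,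
     kraus = map (extK (Suc (dL B) * dR B)) (kraus B) @ map (Jr (Suc (dL B) * dR B) (dL B * dR B)) (rsOf n B),
     measL = (\<lambda>U r. extE (dL B) (measL B U r)), measR = measR B\<rparr>"

lemma rsOf:
  assumes "valid_adv n B"
  shows "(\<forall>r\<in>set (rsOf n B). r \<in> carrier_vec (2^n)) \<and>
     (\<forall>v\<in>carrier_vec (2^n). (\<Sum>K\<leftarrow>kraus B. norm2 (K *\<^sub>v v)) + (\<Sum>r\<leftarrow>rsOf n B. (cmod (r \<bullet> v))\<^sup>2) = norm2 v)"
proof -
  have "\<exists>rs. (\<forall>r\<in>set rs. r \<in> carrier_vec (2^n)) \<and>
     (\<forall>v\<in>carrier_vec (2^n). (\<Sum>K\<leftarrow>kraus B. norm2 (K *\<^sub>v v)) + (\<Sum>r\<leftarrow>rs. (cmod (r \<bullet> v))\<^sup>2) = norm2 v)"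
    by (rule kraus_completion) (use assms in \<open>auto simp: valid_adv_def\<close>)
  then show ?thesis unfolding rsOf_def by (rule someI_ex)
qed

lemma sum_list_cmult: "(\<Sum>x\<leftarrow>xs. c * f x) = (c::real) * (\<Sum>x\<leftarrow>xs. f x)"
  by (induction xs) (auto simp: algebra_simps)

lemma sum_list_cong': "(\<And>x. x \<in> set xs \<Longrightarrow> f x = g x) \<Longrightarrow> (\<Sum>x\<leftarrow>xs. f x) = (\<Sum>x\<leftarrow>xs. g x)"
  by (metis map_cong)

lemma consA_norm:
  assumes V: "valid_adv n B" and dR: "0 < dR B" and v: "v \<in> carrier_vec (2^n)"
  shows "(\<Sum>K\<leftarrow>kraus (consA n B). norm2 (K *\<^sub>v v)) = norm2 v"
proof -
  have Kc: "K \<in> carrier_mat (dL B * dR B) (2^n)" if "K \<in> set (kraus B)" for K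
    using V that unfolding valid_adv_def by auto
  have rc: "r \<in> carrier_vec (2^n)" if "r \<in> set (rsOf n B)" for r using rsOf[OF V] that by auto
  have idx: "dL B * dR B < Suc (dL B) * dR B" using dR by simp
  have e1: "(\<Sum>K\<leftarrow>kraus B. norm2 (extK (Suc (dL B) * dR B) K *\<^sub>v v)) = (\<Sum>K\<leftarrow>kraus B. norm2 (K *\<^sub>v v))"
  proof (rule sum_list_cong')
    fix K assume K: "K \<in> set (kraus B)"
    show "norm2 (extK (Suc (dL B) * dR B) K *\<^sub>v v) = norm2 (K *\<^sub>v v)"
    proof -
      have le: "dL B * dR B \<le> Suc (dL B) * dR B" by simp
      show ?thesis unfolding extK_mult[OF Kc[OF K] le v] using Kc[OF K] le by (intro norm2_pad) auto
    qed
  qed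
  have e2: "(\<Sum>r\<leftarrow>rsOf n B. norm2 (Jr (Suc (dL B) * dR B) (dL B * dR B) r *\<^sub>v v)) = (\<Sum>r\<leftarrow>rsOf n B. (cmod (r \<bullet> v))\<^sup>2)"
  proof (rule sum_list_cong')
    fix r assume r: "r \<in> set (rsOf n B)"
    show "norm2 (Jr (Suc (dL B) * dR B) (dL B * dR B) r *\<^sub>v v) = (cmod (r \<bullet> v))\<^sup>2"
      unfolding Jr_mult[OF rc[OF r] v] by (rule norm2_single[OF idx])
  qed
  show ?thesis unfolding consA_def using e1 e2 rsOf[OF V] v by (simp add: comp_def)
qed

lemma consA_valid:
  assumes V: "valid_adv n B" and dR: "0 < dR B"
  shows "valid_adv n (consA n B) \<and> never_aborts n (consA n B)"
proof -
  have Kc: "K \<in> carrier_mat (dL B * dR B) (2^n)" if "K \<in> set (kraus B)" for K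
    using V that unfolding valid_adv_def by auto
  have rc: "r \<in> carrier_vec (2^n)" if "r \<in> set (rsOf n B)" for r using rsOf[OF V] that by auto
  have c: "\<forall>K \<in> set (kraus (consA n B)). K \<in> carrier_mat (dL (consA n B) * dR (consA n B)) (2 ^ n)"
    unfolding consA_def using Kc rc by (auto intro: extK_carrier Jr_carrier)
  have e: "\<forall>U \<in> InvMats n. \<forall>r \<in> carrier_vec n.
        effect (dL (consA n B)) (measL (consA n B) U r) \<and> effect (dR (consA n B)) (measR (consA n B) U r)"
    using V unfolding valid_adv_def consA_def by (auto intro: effect_extE)
  show ?thesis unfolding valid_adv_def never_aborts_def using c e consA_norm[OF V dR] by auto
qed

lemma effect_zero1: "effect 1 (0\<^sub>m 1 1)"
proof -
  have "qform (0\<^sub>m 1 1) v = 0" if "v \<in> carrier_vec 1" for v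
    using that unfolding qform_def by (auto simp: scalar_prod_def)
  moreover have "0 \<le> norm2 v" for v unfolding norm2_def by (simp add: sum_nonneg)
  ultimately show ?thesis unfolding effect_def by auto
qed

lemma fixA_valid: assumes "valid_adv n B" shows "valid_adv n (fixA B)" "0 < dR (fixA B)"
proof -
  have nn: "0 \<le> norm2 v" for v unfolding norm2_def by (simp add: sum_nonneg)
  show "valid_adv n (fixA B)"
    using assms effect_zero1 nn unfolding fixA_def valid_adv_def by auto
  show "0 < dR (fixA B)" unfolding fixA_def by auto
qed

lemma fixA_id: "0 < dR B \<Longrightarrow> fixA B = B" unfolding fixA_def by simp

lemma zero_dR: assumes V: "valid_adv n B" and d: "dR B = 0" shows "nonabort_prob n B = 0"
  unfolding nonabort_prob_def
proof (rule game_avg_zero)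
  fix U s t rL rR
  have "norm2 (K *\<^sub>v coset_state n U s t) = 0" if "K \<in> set (kraus B)" for K
  proof -
    have "K \<in> carrier_mat 0 (2^n)" using V that d unfolding valid_adv_def by auto
    then show ?thesis unfolding norm2_def by simp
  qed
  then show "(\<Sum>K\<leftarrow>kraus B. norm2 (K *\<^sub>v coset_state n U s t)) = 0"
    using sum_list_cong'[of "kraus B" "\<lambda>K. norm2 (K *\<^sub>v coset_state n U s t)" "\<lambda>K. 0"] by simp
qed

definition winI :: "nat \<Rightarrow> adv \<Rightarrow> bit mat \<Rightarrow> bit vec \<Rightarrow> bit vec \<Rightarrow> bit vec \<Rightarrow> bit vec \<Rightarrow> real" where
  "winI n B U s t rL rR = (\<Sum>K\<leftarrow>kraus B.
        \<Sum>bl \<in> (UNIV :: bit set). \<Sum>br \<in> (UNIV :: bit set).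
          if bl + br = rL \<bullet> s + rR \<bullet> t
          then Re (qform (kron (povm2 (dL B) (measL B U rL) bl) (povm2 (dR B) (measR B U rR) br))
                         (K *\<^sub>v coset_state n U s t))
          else 0)"

definition pinI :: "nat \<Rightarrow> adv \<Rightarrow> bit mat \<Rightarrow> bit vec \<Rightarrow> bit vec \<Rightarrow> bit vec \<Rightarrow> bit vec \<Rightarrow> real" where
  "pinI n B U s t rL rR = (\<Sum>K\<leftarrow>kraus B. norm2 (K *\<^sub>v coset_state n U s t))"

lemma win_prob_alt: "win_prob n B = game_avg n (winI n B)"
  unfolding win_prob_def winI_def ..

lemma nonabort_alt: "nonabort_prob n B = game_avg n (pinI n B)"
  unfolding nonabort_prob_def pinI_def ..

lemma consA_sel:
  "dL (consA n B) = Suc (dL B)" "dR (consA n B) = dR B"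
  "kraus (consA n B) = map (extK (Suc (dL B) * dR B)) (kraus B) @ map (Jr (Suc (dL B) * dR B) (dL B * dR B)) (rsOf n B)"
  "measL (consA n B) U r = extE (dL B) (measL B U r)" "measR (consA n B) = measR B"
  unfolding consA_def by simp_all

lemma Re_help: "Re (complex_of_real x * (1/2 * w)) = x * (1/2 * Re w)" by simp

lemma win_point:
  assumes V: "valid_adv n B" and dR: "0 < dR B" and U: "U \<in> InvMats n" and s: "s \<in> CSA n U"
    and rL: "rL \<in> carrier_vec n" and rR: "rR \<in> carrier_vec n"
  shows "winI n (consA n B) U s t rL rR = winI n B U s t rL rR + 1/2 * (1 - pinI n B U s t rL rR)"
proof -
  let ?\<tau> = "rL \<bullet> s + rR \<bullet> t"
  let ?E = "measL B U rL" and ?F = "measR B U rR" and ?\<psi> = "coset_state n U s t"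
  let ?p = "dL B" and ?q = "dR B"
  have E: "?E \<in> carrier_mat ?p ?p" and F: "?F \<in> carrier_mat ?q ?q"
    using V U rL rR unfolding valid_adv_def effect_def by auto
  have Uc: "U \<in> carrier_mat n n" using U unfolding InvMats_def by auto
  have sc: "s \<in> carrier_vec n" using CSA_carrier[OF Uc] s by auto
  have psi: "?\<psi> \<in> carrier_vec (2^n)" unfolding coset_state_def by simp
  have n1: "norm2 ?\<psi> = 1" by (rule norm2_coset[OF Uc sc])
  have Kc: "K \<in> carrier_mat (?p * ?q) (2^n)" if "K \<in> set (kraus B)" for K
    using V that unfolding valid_adv_def by auto
  have rc: "r \<in> carrier_vec (2^n)" if "r \<in> set (rsOf n B)" for r using rsOf[OF V] that by auto
  define G where "G = (\<lambda>K'. \<Sum>bl \<in> (UNIV :: bit set). \<Sum>br \<in> (UNIV :: bit set).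
          if bl + br = ?\<tau>
          then Re (qform (kron (povm2 (Suc ?p) (extE ?p ?E) bl) (povm2 ?q ?F br)) (K' *\<^sub>v ?\<psi>))
          else 0)"
  define GB where "GB = (\<lambda>K. \<Sum>bl \<in> (UNIV :: bit set). \<Sum>br \<in> (UNIV :: bit set).
          if bl + br = ?\<tau>
          then Re (qform (kron (povm2 ?p ?E bl) (povm2 ?q ?F br)) (K *\<^sub>v ?\<psi>))
          else 0)"
  have w1: "winI n (consA n B) U s t rL rR =
     (\<Sum>K\<leftarrow>kraus B. G (extK (Suc ?p * ?q) K)) + (\<Sum>r\<leftarrow>rsOf n B. G (Jr (Suc ?p * ?q) (?p * ?q) r))"
    unfolding winI_def G_def consA_sel by (simp only: map_append sum_list_append map_map comp_def)
  have w2: "winI n B U s t rL rR = (\<Sum>K\<leftarrow>kraus B. GB K)" unfolding winI_def GB_def ..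
  have g1: "G (extK (Suc ?p * ?q) K) = GB K" if K: "K \<in> set (kraus B)" for K
    unfolding G_def GB_def win_K[OF E F dR Kc[OF K] psi] ..
  have g2: "G (Jr (Suc ?p * ?q) (?p * ?q) r) = 1/2 * (cmod (r \<bullet> ?\<psi>))\<^sup>2" if r: "r \<in> set (rsOf n B)" for r
  proof -
    let ?c = "(cmod (r \<bullet> ?\<psi>))\<^sup>2"
    have "G (Jr (Suc ?p * ?q) (?p * ?q) r) = (\<Sum>bl \<in> (UNIV :: bit set). \<Sum>br \<in> (UNIV :: bit set).
          if bl + br = ?\<tau> then ?c * (1/2 * Re (povm2 ?q ?F br $$ (0, 0))) else 0)"
      unfolding G_def win_J[OF F dR rc[OF r] psi] Re_help ..
    also have "\<dots> = ?c * (1/2 * Re (povm2 ?q ?F 0 $$ (0, 0))) + ?c * (1/2 * Re (povm2 ?q ?F 1 $$ (0, 0)))"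
      by (rule bit_sum_collapse)
    also have "\<dots> = ?c * (1/2 * Re (povm2 ?q ?F 0 $$ (0, 0) + povm2 ?q ?F 1 $$ (0, 0)))"
      by (simp add: algebra_simps)
    also have "\<dots> = 1/2 * ?c" unfolding povm2_sum00[OF F dR] by simp
    finally show ?thesis .
  qed
  have "winI n (consA n B) U s t rL rR = (\<Sum>K\<leftarrow>kraus B. GB K) + (\<Sum>r\<leftarrow>rsOf n B. 1/2 * (cmod (r \<bullet> ?\<psi>))\<^sup>2)"
    unfolding w1 using sum_list_cong'[of "kraus B", OF g1] sum_list_cong'[of "rsOf n B", OF g2] by simp
  also have "(\<Sum>r\<leftarrow>rsOf n B. 1/2 * (cmod (r \<bullet> ?\<psi>))\<^sup>2) = 1/2 * (\<Sum>r\<leftarrow>rsOf n B. (cmod (r \<bullet> ?\<psi>))\<^sup>2)"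
    by (rule sum_list_cmult)
  also have "(\<Sum>r\<leftarrow>rsOf n B. (cmod (r \<bullet> ?\<psi>))\<^sup>2) = 1 - pinI n B U s t rL rR"
    using rsOf[OF V] psi n1 unfolding pinI_def by (metis add_diff_cancel_left')
  finally show ?thesis unfolding w2 .
qed

lemma consA_win:
  assumes V: "valid_adv n B" and dR: "0 < dR B"
  shows "win_prob n (consA n B) = win_prob n B + 1/2 * (1 - nonabort_prob n B)"
proof -
  have "win_prob n (consA n B) = win_prob n B + 1/2 * game_avg n (\<lambda>U s t rL rR. 1 - pinI n B U s t rL rR)"
    unfolding win_prob_alt by (rule game_avg_lin) (use win_point[OF V dR] in auto)
  also have "game_avg n (\<lambda>U s t rL rR. 1 - pinI n B U s t rL rR) = game_avg n (\<lambda>U s t rL rR. 1) + (-1) * game_avg n (pinI n B)"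
    by (rule game_avg_lin) simp
  finally show ?thesis unfolding game_avg_one nonabort_alt by simp
qed

lemma final_arith:
  fixes w p e :: real and k c c' :: nat
  assumes k: "k \<ge> 1" and p: "p \<ge> 1 / real k ^ c" and e: "\<bar>e\<bar> \<le> 1 / real k ^ (c' + c)"
    and w: "w \<le> p / 2 + e"
  shows "\<bar>max 0 (w / p - 1/2)\<bar> \<le> 1 / real k ^ c'"
proof -
  have kc: "real k ^ c > 0" "real k ^ c' > 0" using k by simp_all
  have ppos: "p > 0" using p kc by (smt (verit) divide_pos_pos)
  have pk: "p * real k ^ c \<ge> 1" using p kc by (simp add: field_simps)
  have eq: "w / p - 1/2 = (w - p/2) / p" using ppos by (simp add: field_simps)
  have "w / p - 1/2 \<le> e / p" unfolding eq using w ppos by (intro divide_right_mono) auto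
  also have "e / p \<le> \<bar>e\<bar> / p" using ppos by (simp add: divide_right_mono)
  also have "\<bar>e\<bar> / p \<le> \<bar>e\<bar> * real k ^ c"
  proof -
    have "1 / p \<le> real k ^ c" using pk ppos by (simp add: field_simps)
    then show ?thesis using mult_left_mono[of "1/p" "real k ^ c" "\<bar>e\<bar>"] by simp
  qed
  also have "\<bar>e\<bar> * real k ^ c \<le> (1 / real k ^ (c' + c)) * real k ^ c"
    using e kc by (intro mult_right_mono) auto
  also have "\<dots> = 1 / real k ^ c'" using kc by (simp add: power_add field_simps)
  finally have "w / p - 1/2 \<le> 1 / real k ^ c'" .
  then show ?thesis using kc by simp
qed

lemma lin_help: fixes W w p e :: real
  assumes "W = w + 1/2 * (1 - p)" "W \<le> 1/2 + e" shows "w \<le> p / 2 + e"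
proof -
  have "2 * W = 2 * w + 1 - p" using assms(1) by (simp add: field_simps)
  then show ?thesis using assms(2) by (simp add: field_simps)
qed

theorem mainTheorem3:
  fixes n :: "nat \<Rightarrow> nat" and Adv :: "nat \<Rightarrow> adv"
  assumes known_no_abort:
    "\<And>B :: nat \<Rightarrow> adv. (\<forall>k. valid_adv (n k) (B k) \<and> never_aborts (n k) (B k)) \<Longrightarrow>
       \<exists>\<epsilon>. negligible \<epsilon> \<and> (\<forall>k. win_prob (n k) (B k) \<le> 1/2 + \<epsilon> k)"
    and valid: "\<forall>k. valid_adv (n k) (Adv k)"
    and nonabort: "noticeable (\<lambda>k. nonabort_prob (n k) (Adv k))"
  shows "\<exists>\<epsilon>. negligible \<epsilon> \<and>
           (\<forall>k. win_prob (n k) (Adv k) / nonabort_prob (n k) (Adv k) \<le> 1/2 + \<epsilon> k)"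
proof -
  define B where "B = (\<lambda>k. consA (n k) (fixA (Adv k)))"
  have VB: "\<forall>k. valid_adv (n k) (B k) \<and> never_aborts (n k) (B k)"
    unfolding B_def using consA_valid fixA_valid valid by blast
  obtain \<epsilon> where neg: "negligible \<epsilon>" and wb: "\<forall>k. win_prob (n k) (B k) \<le> 1/2 + \<epsilon> k"
    using known_no_abort[OF VB] by blast
  obtain c :: nat where ev: "\<forall>\<^sub>F k in sequentially. nonabort_prob (n k) (Adv k) \<ge> 1 / real k ^ c"
    using nonabort unfolding noticeable_def by blast
  define \<epsilon>' where "\<epsilon>' = (\<lambda>k. max 0 (win_prob (n k) (Adv k) / nonabort_prob (n k) (Adv k) - 1/2))"
  have main: "\<forall>k. win_prob (n k) (Adv k) / nonabort_prob (n k) (Adv k) \<le> 1/2 + \<epsilon>' k"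
    unfolding \<epsilon>'_def by (simp add: max_def)
  have "negligible \<epsilon>'"
    unfolding negligible_def
  proof
    fix c' :: nat
    have e1: "\<forall>\<^sub>F k in sequentially. \<bar>\<epsilon> k\<bar> \<le> 1 / real k ^ (c' + c)"
      using neg unfolding negligible_def by blast
    have e2: "\<forall>\<^sub>F k in sequentially. k \<ge> 1" by (rule eventually_ge_at_top)
    have "\<forall>\<^sub>F k in sequentially. \<bar>\<epsilon> k\<bar> \<le> 1 / real k ^ (c' + c) \<and> k \<ge> 1 \<and> nonabort_prob (n k) (Adv k) \<ge> 1 / real k ^ c"
      using e1 e2 ev by (intro eventually_conj)
    then show "\<forall>\<^sub>F k in sequentially. \<bar>\<epsilon>' k\<bar> \<le> 1 / real k ^ c'"
    proof (rule eventually_mono)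
      fix k assume H: "\<bar>\<epsilon> k\<bar> \<le> 1 / real k ^ (c' + c) \<and> k \<ge> 1 \<and> nonabort_prob (n k) (Adv k) \<ge> 1 / real k ^ c"
      let ?p = "nonabort_prob (n k) (Adv k)" and ?w = "win_prob (n k) (Adv k)"
      have "real k ^ c > 0" using H by simp
      then have pp: "?p > 0" using H by (smt (verit) divide_pos_pos)
      have dR: "0 < dR (Adv k)"
      proof (rule ccontr)
        assume "\<not> 0 < dR (Adv k)"
        then have "?p = 0" using zero_dR valid by simp
        then show False using pp by simp
      qed
      have "win_prob (n k) (B k) = ?w + 1/2 * (1 - ?p)"
        unfolding B_def fixA_id[OF dR] using consA_win valid dR by blast
      then have "?w \<le> ?p / 2 + \<epsilon> k" using wb[rule_format, of k] by (rule lin_help)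
      then show "\<bar>\<epsilon>' k\<bar> \<le> 1 / real k ^ c'" unfolding \<epsilon>'_def using final_arith H by blast
    qed
  qed
  then show ?thesis using main by blast
qed

end
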